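(* Let $(L,\delta,\alpha,\beta)$, $(V,\mu,\alpha_V,\beta_V)$ and $(M,d',\alpha_M,\beta_M)$ be BiHom-Lie algebras and let $$E:\ 0\longrightarrow (V,\mu,\alpha_V,\beta_V)\xrightarrow{\ i\ }(M,d',\alpha_M,\beta_M)\xrightarrow{\ \pi\ }(L,\delta,\alpha,\beta)\longrightarrow 0$$ be a split extension of $L$ by $V$. Then there exist bilinear maps $\lambda_l\colon L\times V\to V$, $\lambda_r\colon V\times L\to V$, $\theta\colon L\times L\to V$ such that, with $d\colon (L\oplus V)^2\to L\oplus V$ defined by $$d(x+v,y+w)=\delta(x,y)+\theta(x,y)+\lambda_l(x,w)+\lambda_r(v,y)+\mu(v,w)\qquad(x,y\in L,\ v,w\in V),$$ the pair $(\lambda_l,\lambda_r)$ is a representation of $L$ on $(V,\alpha_V,\beta_V)$, $\theta$ is a $2$-cocycle of $L$ on $V$ with respect to it, and $$E_0:\ 0\longrightarrow (V,\mu,\alpha_V,\beta_V)\xrightarrow{\ i_0\ }(L\oplus V,d,\alpha+\alpha_V,\beta+\beta_V)\xrightarrow{\ \pi_0\ }(L,\delta,\alpha,\beta)\longrightarrow 0,$$ where $i_0(v)=v$ and $\pi_0(x+v)=x$, is a split extension of $L$ by $V$ which is equivalent to $E$.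
   Context: All vector spaces are over a field $\mathbb{K}$. A BiHom-Lie algebra $(L,[\cdot,\cdot],\alpha,\beta)$ is a vector space $L$ with a bilinear map $[\cdot,\cdot]\colon L\times L\to L$ and linear maps $\alpha,\beta\colon L\to L$ such that $\alpha\circ\beta=\beta\circ\alpha$, $[\beta(x),\alpha(y)]=-[\beta(y),\alpha(x)]$, and $[\beta^2(x),[\beta(y),\alpha(z)]]+[\beta^2(y),[\beta(z),\alpha(x)]]+[\beta^2(z),[\beta(x),\alpha(y)]]=0$ for all $x,y,z$ ($\alpha,\beta$ need not be multiplicative). A morphism $f\colon(L,[\cdot,\cdot],\alpha,\beta)\to(L',[\cdot,\cdot]',\alpha',\beta')$ is a linear map with $f\circ\alpha=\alpha'\circ f$, $f\circ\beta=\beta'\circ f$, $f([x,y])=[f(x),f(y)]'$. A BiHom-subalgebra of $(M,d,\alpha_M,\beta_M)$ is a subspace $H$ with $\alpha_M(H)\subset H$, $\beta_M(H)\subset H$, $d(H,H)\subset H$. On $L\oplus V$, $\alpha+\alpha_V$ denotes $x+v\mapsto\alpha(x)+\alpha_V(v)$, similarly $\beta+\beta_V$. An extension of $(L,\delta,\alpha,\beta)$ by $(V,\mu,\alpha_V,\beta_V)$ is a sequence $0\to V\xrightarrow{i}M\xrightarrow{\pi}L\to0$ of BiHom-Lie algebras and morphisms with $i$ injective, $\pi$ surjective, $\mathrm{Im}(i)=\ker(\pi)$. It is split if there is a BiHom-subalgebra $S\subset M$ with $M=S\oplus\ker\pi$. Two extensions $0\to V_1\xrightarrow{i_1}M_1\xrightarrow{\pi_1}L_1\to0$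 and $0\to V_2\xrightarrow{i_2}M_2\xrightarrow{\pi_2}L_2\to0$ are equivalent if there are linear maps $\varphi\colon V_1\to V_2$, $s\colon L_1\to L_2$ and an isomorphism of BiHom-Lie algebras $\Phi\colon M_1\to M_2$ with $\Phi\circ i_1=i_2\circ\varphi$ and $\pi_2\circ\Phi=s\circ\pi_1$. A representation of $(L,\delta,\alpha,\beta)$ on $(V,\alpha_V,\beta_V)$ (with $\alpha_V\beta_V=\beta_V\alpha_V$) is a pair of bilinear maps $\lambda_l\colon L\times V\to V$, $\lambda_r\colon V\times L\to V$ with, for all $x,y\in L$, $v\in V$: $\lambda_r(\beta_V(v),\alpha(y))=-\lambda_l(\beta(y),\alpha_V(v))$ and $\lambda_l(\beta^2(x),\lambda_l(\beta(y),\alpha_V(v)))+\lambda_l(\beta^2(y),\lambda_r(\beta_V(v),\alpha(x)))+\lambda_r(\beta_V^2(v),\delta(\beta(x),\alpha(y)))=0$. A $2$-cocycle of $L$ on $V$ with respect to it is a bilinear $\theta\colon L\times L\to V$ with $\theta(\beta(x),\alpha(y))=-\theta(\beta(y),\alpha(x))$ and $\theta(\beta^2(x),\delta(\beta(y),\alpha(z)))-\theta(\beta^2(y),\delta(\beta(x),\alpha(z)))+\theta(\beta^2(z),\delta(\beta(x),\alpha(y)))+\lambda_l(\beta^2(x),\theta(\beta(y),\alpha(z)))-\lambda_l(\beta^2(y),\theta(\beta(x),\alpha(z)))+\lambda_l(\beta^2(z),\theta(\beta(x),\alpha(y)))=0$ for all $x,y,z\in L$. *)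

theory Defs
  imports "HOL-Analysis.Analysis"
begin

text \<open>Vector spaces over a field 'k are carried by types of class ab_group_add
  together with an explicit scalar multiplication satisfying the vector_space axioms.\<close>

definition bilinear_map ::
  "('k::field \<Rightarrow> 'a::ab_group_add \<Rightarrow> 'a) \<Rightarrow> ('k \<Rightarrow> 'b::ab_group_add \<Rightarrow> 'b) \<Rightarrow>
   ('k \<Rightarrow> 'c::ab_group_add \<Rightarrow> 'c) \<Rightarrow> ('a \<Rightarrow> 'b \<Rightarrow> 'c) \<Rightarrow> bool" where
  "bilinear_map s1 s2 s3 f \<longleftrightarrow>
     (\<forall>x. Vector_Spaces.linear s2 s3 (f x)) \<and> (\<forall>y. Vector_Spaces.linear s1 s3 (\<lambda>x. f x y))"

definition BiHomLie ::
  "('k::field \<Rightarrow> 'a::ab_group_add \<Rightarrow> 'a) \<Rightarrow> ('a \<Rightarrow> 'a \<Rightarrow> 'a) \<Rightarrow> ('a \<Rightarrow> 'a) \<Rightarrow> ('a \<Rightarrow> 'a) \<Rightarrow> bool" where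
  "BiHomLie s br \<alpha> \<beta> \<longleftrightarrow>
     bilinear_map s s s br \<and> Vector_Spaces.linear s s \<alpha> \<and> Vector_Spaces.linear s s \<beta> \<and>
     \<alpha> \<circ> \<beta> = \<beta> \<circ> \<alpha> \<and>
     (\<forall>x y. br (\<beta> x) (\<alpha> y) = - br (\<beta> y) (\<alpha> x)) \<and>
     (\<forall>x y z. br (\<beta> (\<beta> x)) (br (\<beta> y) (\<alpha> z)) + br (\<beta> (\<beta> y)) (br (\<beta> z) (\<alpha> x))
              + br (\<beta> (\<beta> z)) (br (\<beta> x) (\<alpha> y)) = 0)"

definition BiHom_morphism ::
  "('k::field \<Rightarrow> 'a::ab_group_add \<Rightarrow> 'a) \<Rightarrow> ('a \<Rightarrow> 'a \<Rightarrow> 'a) \<Rightarrow> ('a \<Rightarrow> 'a) \<Rightarrow> ('a \<Rightarrow> 'a) \<Rightarrow>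
   ('k \<Rightarrow> 'b::ab_group_add \<Rightarrow> 'b) \<Rightarrow> ('b \<Rightarrow> 'b \<Rightarrow> 'b) \<Rightarrow> ('b \<Rightarrow> 'b) \<Rightarrow> ('b \<Rightarrow> 'b) \<Rightarrow>
   ('a \<Rightarrow> 'b) \<Rightarrow> bool" where
  "BiHom_morphism s br \<alpha> \<beta> s' br' \<alpha>' \<beta>' f \<longleftrightarrow>
     Vector_Spaces.linear s s' f \<and> f \<circ> \<alpha> = \<alpha>' \<circ> f \<and> f \<circ> \<beta> = \<beta>' \<circ> f \<and>
     (\<forall>x y. f (br x y) = br' (f x) (f y))"

definition BiHom_iso ::
  "('k::field \<Rightarrow> 'a::ab_group_add \<Rightarrow> 'a) \<Rightarrow> ('a \<Rightarrow> 'a \<Rightarrow> 'a) \<Rightarrow> ('a \<Rightarrow> 'a) \<Rightarrow> ('a \<Rightarrow> 'a) \<Rightarrow>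
   ('k \<Rightarrow> 'b::ab_group_add \<Rightarrow> 'b) \<Rightarrow> ('b \<Rightarrow> 'b \<Rightarrow> 'b) \<Rightarrow> ('b \<Rightarrow> 'b) \<Rightarrow> ('b \<Rightarrow> 'b) \<Rightarrow>
   ('a \<Rightarrow> 'b) \<Rightarrow> bool" where
  "BiHom_iso s br \<alpha> \<beta> s' br' \<alpha>' \<beta>' f \<longleftrightarrow>
     BiHom_morphism s br \<alpha> \<beta> s' br' \<alpha>' \<beta>' f \<and> bij f \<and>
     BiHom_morphism s' br' \<alpha>' \<beta>' s br \<alpha> \<beta> (inv f)"

definition BiHom_subalgebra ::
  "('k::field \<Rightarrow> 'a::ab_group_add \<Rightarrow> 'a) \<Rightarrow> ('a \<Rightarrow> 'a \<Rightarrow> 'a) \<Rightarrow> ('a \<Rightarrow> 'a) \<Rightarrow> ('a \<Rightarrow> 'a) \<Rightarrow>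
   'a set \<Rightarrow> bool" where
  "BiHom_subalgebra s br \<alpha> \<beta> H \<longleftrightarrow>
     module.subspace s H \<and> \<alpha> ` H \<subseteq> H \<and> \<beta> ` H \<subseteq> H \<and>
     (\<forall>x\<in>H. \<forall>y\<in>H. br x y \<in> H)"

definition BiHom_extension ::
  "('k::field \<Rightarrow> 'v::ab_group_add \<Rightarrow> 'v) \<Rightarrow> ('v \<Rightarrow> 'v \<Rightarrow> 'v) \<Rightarrow> ('v \<Rightarrow> 'v) \<Rightarrow> ('v \<Rightarrow> 'v) \<Rightarrow>
   ('k \<Rightarrow> 'm::ab_group_add \<Rightarrow> 'm) \<Rightarrow> ('m \<Rightarrow> 'm \<Rightarrow> 'm) \<Rightarrow> ('m \<Rightarrow> 'm) \<Rightarrow> ('m \<Rightarrow> 'm) \<Rightarrow>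
   ('k \<Rightarrow> 'l::ab_group_add \<Rightarrow> 'l) \<Rightarrow> ('l \<Rightarrow> 'l \<Rightarrow> 'l) \<Rightarrow> ('l \<Rightarrow> 'l) \<Rightarrow> ('l \<Rightarrow> 'l) \<Rightarrow>
   ('v \<Rightarrow> 'm) \<Rightarrow> ('m \<Rightarrow> 'l) \<Rightarrow> bool" where
  "BiHom_extension sV \<mu> \<alpha>V \<beta>V sM dM \<alpha>M \<beta>M sL \<delta> \<alpha> \<beta> i \<pi> \<longleftrightarrow>
     BiHomLie sV \<mu> \<alpha>V \<beta>V \<and> BiHomLie sM dM \<alpha>M \<beta>M \<and> BiHomLie sL \<delta> \<alpha> \<beta> \<and>
     BiHom_morphism sV \<mu> \<alpha>V \<beta>V sM dM \<alpha>M \<beta>M i \<and>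
     BiHom_morphism sM dM \<alpha>M \<beta>M sL \<delta> \<alpha> \<beta> \<pi> \<and>
     inj i \<and> surj \<pi> \<and> range i = {m. \<pi> m = 0}"

definition BiHom_split_extension ::
  "('k::field \<Rightarrow> 'v::ab_group_add \<Rightarrow> 'v) \<Rightarrow> ('v \<Rightarrow> 'v \<Rightarrow> 'v) \<Rightarrow> ('v \<Rightarrow> 'v) \<Rightarrow> ('v \<Rightarrow> 'v) \<Rightarrow>
   ('k \<Rightarrow> 'm::ab_group_add \<Rightarrow> 'm) \<Rightarrow> ('m \<Rightarrow> 'm \<Rightarrow> 'm) \<Rightarrow> ('m \<Rightarrow> 'm) \<Rightarrow> ('m \<Rightarrow> 'm) \<Rightarrow>
   ('k \<Rightarrow> 'l::ab_group_add \<Rightarrow> 'l) \<Rightarrow> ('l \<Rightarrow> 'l \<Rightarrow> 'l) \<Rightarrow> ('l \<Rightarrow> 'l) \<Rightarrow> ('l \<Rightarrow> 'l) \<Rightarrow>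
   ('v \<Rightarrow> 'm) \<Rightarrow> ('m \<Rightarrow> 'l) \<Rightarrow> bool" where
  "BiHom_split_extension sV \<mu> \<alpha>V \<beta>V sM dM \<alpha>M \<beta>M sL \<delta> \<alpha> \<beta> i \<pi> \<longleftrightarrow>
     BiHom_extension sV \<mu> \<alpha>V \<beta>V sM dM \<alpha>M \<beta>M sL \<delta> \<alpha> \<beta> i \<pi> \<and>
     (\<exists>S. BiHom_subalgebra sM dM \<alpha>M \<beta>M S \<and>
          (\<forall>m. \<exists>!p. fst p \<in> S \<and> \<pi> (snd p) = 0 \<and> m = fst p + snd p))"

definition BiHom_ext_equivalent ::
  "('k::field \<Rightarrow> 'v1::ab_group_add \<Rightarrow> 'v1) \<Rightarrow>
   ('k \<Rightarrow> 'm1::ab_group_add \<Rightarrow> 'm1) \<Rightarrow> ('m1 \<Rightarrow> 'm1 \<Rightarrow> 'm1) \<Rightarrow> ('m1 \<Rightarrow> 'm1) \<Rightarrow> ('m1 \<Rightarrow> 'm1) \<Rightarrow>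
   ('k \<Rightarrow> 'l1::ab_group_add \<Rightarrow> 'l1) \<Rightarrow> ('v1 \<Rightarrow> 'm1) \<Rightarrow> ('m1 \<Rightarrow> 'l1) \<Rightarrow>
   ('k \<Rightarrow> 'v2::ab_group_add \<Rightarrow> 'v2) \<Rightarrow>
   ('k \<Rightarrow> 'm2::ab_group_add \<Rightarrow> 'm2) \<Rightarrow> ('m2 \<Rightarrow> 'm2 \<Rightarrow> 'm2) \<Rightarrow> ('m2 \<Rightarrow> 'm2) \<Rightarrow> ('m2 \<Rightarrow> 'm2) \<Rightarrow>
   ('k \<Rightarrow> 'l2::ab_group_add \<Rightarrow> 'l2) \<Rightarrow> ('v2 \<Rightarrow> 'm2) \<Rightarrow> ('m2 \<Rightarrow> 'l2) \<Rightarrow> bool" where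
  "BiHom_ext_equivalent sV1 sM1 d1 \<alpha>1 \<beta>1 sL1 i1 \<pi>1 sV2 sM2 d2 \<alpha>2 \<beta>2 sL2 i2 \<pi>2 \<longleftrightarrow>
     (\<exists>\<phi> s \<Phi>. Vector_Spaces.linear sV1 sV2 \<phi> \<and> Vector_Spaces.linear sL1 sL2 s \<and>
        BiHom_iso sM1 d1 \<alpha>1 \<beta>1 sM2 d2 \<alpha>2 \<beta>2 \<Phi> \<and>
        \<Phi> \<circ> i1 = i2 \<circ> \<phi> \<and> \<pi>2 \<circ> \<Phi> = s \<circ> \<pi>1)"

definition BiHom_representation ::
  "('l \<Rightarrow> 'l \<Rightarrow> 'l) \<Rightarrow> ('l \<Rightarrow> 'l) \<Rightarrow> ('l \<Rightarrow> 'l) \<Rightarrow> ('v::ab_group_add \<Rightarrow> 'v) \<Rightarrow> ('v \<Rightarrow> 'v) \<Rightarrow>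
   ('l \<Rightarrow> 'v \<Rightarrow> 'v) \<Rightarrow> ('v \<Rightarrow> 'l \<Rightarrow> 'v) \<Rightarrow> bool" where
  "BiHom_representation \<delta> \<alpha> \<beta> \<alpha>V \<beta>V ll lr \<longleftrightarrow>
     \<alpha>V \<circ> \<beta>V = \<beta>V \<circ> \<alpha>V \<and>
     (\<forall>y v. lr (\<beta>V v) (\<alpha> y) = - ll (\<beta> y) (\<alpha>V v)) \<and>
     (\<forall>x y v. ll (\<beta> (\<beta> x)) (ll (\<beta> y) (\<alpha>V v)) + ll (\<beta> (\<beta> y)) (lr (\<beta>V v) (\<alpha> x))
              + lr (\<beta>V (\<beta>V v)) (\<delta> (\<beta> x) (\<alpha> y)) = 0)"

definition BiHom_2cocycle ::
  "('l \<Rightarrow> 'l \<Rightarrow> 'l) \<Rightarrow> ('l \<Rightarrow> 'l) \<Rightarrow> ('l \<Rightarrow> 'l) \<Rightarrow> ('l \<Rightarrow> 'v::ab_group_add \<Rightarrow> 'v) \<Rightarrow>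
   ('l \<Rightarrow> 'l \<Rightarrow> 'v) \<Rightarrow> bool" where
  "BiHom_2cocycle \<delta> \<alpha> \<beta> ll \<theta> \<longleftrightarrow>
     (\<forall>x y. \<theta> (\<beta> x) (\<alpha> y) = - \<theta> (\<beta> y) (\<alpha> x)) \<and>
     (\<forall>x y z. \<theta> (\<beta> (\<beta> x)) (\<delta> (\<beta> y) (\<alpha> z)) - \<theta> (\<beta> (\<beta> y)) (\<delta> (\<beta> x) (\<alpha> z))
              + \<theta> (\<beta> (\<beta> z)) (\<delta> (\<beta> x) (\<alpha> y))
              + ll (\<beta> (\<beta> x)) (\<theta> (\<beta> y) (\<alpha> z)) - ll (\<beta> (\<beta> y)) (\<theta> (\<beta> x) (\<alpha> z))
              + ll (\<beta> (\<beta> z)) (\<theta> (\<beta> x) (\<alpha> y)) = 0)"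

text \<open>The direct sum L \<oplus> V is modelled as the product type; x + v is (x, v).\<close>
definition sum_scale :: "('k \<Rightarrow> 'l \<Rightarrow> 'l) \<Rightarrow> ('k \<Rightarrow> 'v \<Rightarrow> 'v) \<Rightarrow> 'k \<Rightarrow> 'l \<times> 'v \<Rightarrow> 'l \<times> 'v" where
  "sum_scale sL sV c p = (sL c (fst p), sV c (snd p))"

definition sum_map :: "('l \<Rightarrow> 'l) \<Rightarrow> ('v \<Rightarrow> 'v) \<Rightarrow> 'l \<times> 'v \<Rightarrow> 'l \<times> 'v" where
  "sum_map f g p = (f (fst p), g (snd p))"

definition semidirect_bracket ::
  "('l \<Rightarrow> 'l \<Rightarrow> 'l) \<Rightarrow> ('l \<Rightarrow> 'l \<Rightarrow> 'v::ab_group_add) \<Rightarrow> ('l \<Rightarrow> 'v \<Rightarrow> 'v) \<Rightarrow> ('v \<Rightarrow> 'l \<Rightarrow> 'v) \<Rightarrow>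
   ('v \<Rightarrow> 'v \<Rightarrow> 'v) \<Rightarrow> 'l \<times> 'v \<Rightarrow> 'l \<times> 'v \<Rightarrow> 'l \<times> 'v" where
  "semidirect_bracket \<delta> \<theta> ll lr \<mu> p q =
     (\<delta> (fst p) (fst q),
      \<theta> (fst p) (fst q) + ll (fst p) (snd q) + lr (snd p) (fst q) + \<mu> (snd p) (snd q))"

end

theory Submission imports Defs begin


lemma lin_add: "Vector_Spaces.linear s1 s2 f \<Longrightarrow> f (x+y) = f x + f y"
  by (simp add: Vector_Spaces.linear_iff)
lemma lin_scale: "Vector_Spaces.linear s1 s2 f \<Longrightarrow> f (s1 c x) = s2 c (f x)"
  by (simp add: Vector_Spaces.linear_iff)
lemma lin_vs1: "Vector_Spaces.linear s1 s2 f \<Longrightarrow> vector_space s1"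
  by (simp add: Vector_Spaces.linear_iff)
lemma lin_vs2: "Vector_Spaces.linear s1 s2 f \<Longrightarrow> vector_space s2"
  by (simp add: Vector_Spaces.linear_iff)
lemma lin_zero: "Vector_Spaces.linear s1 s2 f \<Longrightarrow> f 0 = 0"
  by (metis add_cancel_right_right lin_add)
lemma lin_minus: "Vector_Spaces.linear s1 s2 f \<Longrightarrow> f (- x) = - f x"
  by (metis add.right_inverse add_eq_0_iff lin_add lin_zero)
lemma lin_diff: "Vector_Spaces.linear s1 s2 f \<Longrightarrow> f (x - y) = f x - f y"
  by (metis diff_conv_add_uminus lin_add lin_minus)
lemma linI: "vector_space s1 \<Longrightarrow> vector_space s2 \<Longrightarrow> (\<And>x y. f (x + y) = f x + f y)
  \<Longrightarrow> (\<And>c x. f (s1 c x) = s2 c (f x)) \<Longrightarrow> Vector_Spaces.linear s1 s2 f"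
  by (simp add: Vector_Spaces.linear_iff)
lemma vs_scale_zero: "vector_space s \<Longrightarrow> s c 0 = 0"
  by (metis add_cancel_right_right add_0 vector_space_def)

lemma vs_prod: "vector_space sL \<Longrightarrow> vector_space sV \<Longrightarrow> vector_space (sum_scale sL sV)"
  unfolding vector_space_def sum_scale_def by (auto simp: prod_eq_iff)

lemma bil_l: "bilinear_map s1 s2 s3 f \<Longrightarrow> Vector_Spaces.linear s2 s3 (f x)"
  by (simp add: bilinear_map_def)
lemma bil_r: "bilinear_map s1 s2 s3 f \<Longrightarrow> Vector_Spaces.linear s1 s3 (\<lambda>x. f x y)"
  by (simp add: bilinear_map_def)

lemma transport_BiHomLie:
  assumes lf: "Vector_Spaces.linear s s' f" and inj: "inj f"
    and fa: "\<And>x. f (\<alpha> x) = \<alpha>' (f x)" and fb: "\<And>x. f (\<beta> x) = \<beta>' (f x)"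
    and fbr: "\<And>x y. f (br x y) = br' (f x) (f y)"
    and B: "BiHomLie s' br' \<alpha>' \<beta>'"
  shows "BiHomLie s br \<alpha> \<beta>"
proof -
  have vs: "vector_space s" using lin_vs1[OF lf] .
  have vs': "vector_space s'" using lin_vs2[OF lf] .
  from B have bil: "bilinear_map s' s' s' br'" and la: "Vector_Spaces.linear s' s' \<alpha>'"
    and lb: "Vector_Spaces.linear s' s' \<beta>'" and comm: "\<alpha>' \<circ> \<beta>' = \<beta>' \<circ> \<alpha>'"
    and sk: "\<And>x y. br' (\<beta>' x) (\<alpha>' y) = - br' (\<beta>' y) (\<alpha>' x)"
    and jac: "\<And>x y z. br' (\<beta>' (\<beta>' x)) (br' (\<beta>' y) (\<alpha>' z)) + br' (\<beta>' (\<beta>' y)) (br' (\<beta>' z) (\<alpha>' x))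
              + br' (\<beta>' (\<beta>' z)) (br' (\<beta>' x) (\<alpha>' y)) = 0"
    unfolding BiHomLie_def by blast+
  have fadd: "\<And>a b. f (a + b) = f a + f b" using lin_add[OF lf] .
  have fsc: "\<And>c a. f (s c a) = s' c (f a)" using lin_scale[OF lf] .
  have fz: "f 0 = 0" using lin_zero[OF lf] .
  have fm: "\<And>a. f (- a) = - f a" using lin_minus[OF lf] .
  have injE: "\<And>a b. f a = f b \<Longrightarrow> a = b" using inj by (simp add: inj_eq)
  have "bilinear_map s s s br"
    unfolding bilinear_map_def
  proof (intro allI conjI)
    fix x show "Vector_Spaces.linear s s (br x)"
      apply (rule linI[OF vs vs])
      apply (rule injE) apply (simp add: fbr fadd lin_add[OF bil_l[OF bil]])
      apply (rule injE) apply (simp add: fbr fsc lin_scale[OF bil_l[OF bil]])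
      done
  next
    fix y show "Vector_Spaces.linear s s (\<lambda>x. br x y)"
      apply (rule linI[OF vs vs])
      apply (rule injE) apply (simp add: fbr fadd lin_add[OF bil_r[OF bil]])
      apply (rule injE) apply (simp add: fbr fsc lin_scale[OF bil_r[OF bil]])
      done
  qed
  moreover have "Vector_Spaces.linear s s \<alpha>"
      apply (rule linI[OF vs vs])
      apply (rule injE) apply (simp add: fa fadd lin_add[OF la])
      apply (rule injE) apply (simp add: fa fsc lin_scale[OF la])
      done
  moreover have "Vector_Spaces.linear s s \<beta>"
      apply (rule linI[OF vs vs])
      apply (rule injE) apply (simp add: fb fadd lin_add[OF lb])
      apply (rule injE) apply (simp add: fb fsc lin_scale[OF lb])
      done
  moreover have "\<alpha> \<circ> \<beta> = \<beta> \<circ> \<alpha>"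
  proof
    fix x show "(\<alpha> \<circ> \<beta>) x = (\<beta> \<circ> \<alpha>) x"
      apply (rule injE) using fun_cong[OF comm, of "f x"] by (simp add: fa fb)
  qed
  moreover have "\<And>x y. br (\<beta> x) (\<alpha> y) = - br (\<beta> y) (\<alpha> x)"
    subgoal for x y by (rule injE) (use sk[of "f x" "f y"] in \<open>simp add: fbr fa fb fm\<close>)
    done
  moreover have "\<And>x y z. br (\<beta> (\<beta> x)) (br (\<beta> y) (\<alpha> z)) + br (\<beta> (\<beta> y)) (br (\<beta> z) (\<alpha> x))
              + br (\<beta> (\<beta> z)) (br (\<beta> x) (\<alpha> y)) = 0"
    subgoal for x y z by (rule injE) (use jac[of "f x" "f y" "f z"] in \<open>simp add: fbr fa fb fadd fz\<close>)
    done
  ultimately show ?thesis unfolding BiHomLie_def by blast+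
qed

lemma inv_morphism:
  assumes M: "BiHom_morphism s br \<alpha> \<beta> s' br' \<alpha>' \<beta>' f" and b: "bij f"
  shows "BiHom_morphism s' br' \<alpha>' \<beta>' s br \<alpha> \<beta> (inv f)"
proof -
  from M have lf: "Vector_Spaces.linear s s' f" and fa: "f \<circ> \<alpha> = \<alpha>' \<circ> f" and fb: "f \<circ> \<beta> = \<beta>' \<circ> f"
    and fbr: "\<And>x y. f (br x y) = br' (f x) (f y)" unfolding BiHom_morphism_def by blast+
  have injE: "\<And>a b. f a = f b \<Longrightarrow> a = b" using b by (simp add: bij_def inj_eq)
  have fi: "\<And>y. f (inv f y) = y" using b by (simp add: bij_def surj_f_inv_f)
  have "Vector_Spaces.linear s' s (inv f)"
    apply (rule linI[OF lin_vs2[OF lf] lin_vs1[OF lf]])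
    apply (rule injE) apply (simp add: fi lin_add[OF lf])
    apply (rule injE) apply (simp add: fi lin_scale[OF lf])
    done
  moreover have "inv f \<circ> \<alpha>' = \<alpha> \<circ> inv f"
  proof
    fix y show "(inv f \<circ> \<alpha>') y = (\<alpha> \<circ> inv f) y"
      apply (rule injE) using fun_cong[OF fa, of "inv f y"] by (simp add: fi)
  qed
  moreover have "inv f \<circ> \<beta>' = \<beta> \<circ> inv f"
  proof
    fix y show "(inv f \<circ> \<beta>') y = (\<beta> \<circ> inv f) y"
      apply (rule injE) using fun_cong[OF fb, of "inv f y"] by (simp add: fi)
  qed
  moreover have "\<And>x y. inv f (br' x y) = br (inv f x) (inv f y)"
    by (rule injE) (simp add: fi fbr)
  ultimately show ?thesis unfolding BiHom_morphism_def by blast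
qed



theorem mainTheorem2:
  fixes sL :: "'k::field \<Rightarrow> 'l::ab_group_add \<Rightarrow> 'l"
    and sV :: "'k \<Rightarrow> 'v::ab_group_add \<Rightarrow> 'v"
    and sM :: "'k \<Rightarrow> 'm::ab_group_add \<Rightarrow> 'm"
    and \<delta> :: "'l \<Rightarrow> 'l \<Rightarrow> 'l" and \<alpha> \<beta> :: "'l \<Rightarrow> 'l"
    and \<mu> :: "'v \<Rightarrow> 'v \<Rightarrow> 'v" and \<alpha>V \<beta>V :: "'v \<Rightarrow> 'v"
    and d' :: "'m \<Rightarrow> 'm \<Rightarrow> 'm" and \<alpha>M \<beta>M :: "'m \<Rightarrow> 'm"
    and i :: "'v \<Rightarrow> 'm" and \<pi> :: "'m \<Rightarrow> 'l"
  assumes "BiHomLie sL \<delta> \<alpha> \<beta>"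
    and "BiHomLie sV \<mu> \<alpha>V \<beta>V"
    and "BiHomLie sM d' \<alpha>M \<beta>M"
    and "BiHom_split_extension sV \<mu> \<alpha>V \<beta>V sM d' \<alpha>M \<beta>M sL \<delta> \<alpha> \<beta> i \<pi>"
  shows "\<exists>ll lr \<theta>.
           bilinear_map sL sV sV ll \<and> bilinear_map sV sL sV lr \<and> bilinear_map sL sL sV \<theta> \<and>
           BiHom_representation \<delta> \<alpha> \<beta> \<alpha>V \<beta>V ll lr \<and>
           BiHom_2cocycle \<delta> \<alpha> \<beta> ll \<theta> \<and>
           BiHom_split_extension sV \<mu> \<alpha>V \<beta>V
             (sum_scale sL sV) (semidirect_bracket \<delta> \<theta> ll lr \<mu>) (sum_map \<alpha> \<alpha>V) (sum_map \<beta> \<beta>V)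
             sL \<delta> \<alpha> \<beta> (\<lambda>v. (0, v)) fst \<and>
           BiHom_ext_equivalent
             sV (sum_scale sL sV) (semidirect_bracket \<delta> \<theta> ll lr \<mu>) (sum_map \<alpha> \<alpha>V) (sum_map \<beta> \<beta>V)
             sL (\<lambda>v. (0, v)) fst
             sV sM d' \<alpha>M \<beta>M sL i \<pi>"
proof -
  from assms(4) have ext: "BiHom_extension sV \<mu> \<alpha>V \<beta>V sM d' \<alpha>M \<beta>M sL \<delta> \<alpha> \<beta> i \<pi>"
    and "\<exists>S. BiHom_subalgebra sM d' \<alpha>M \<beta>M S \<and>
          (\<forall>m. \<exists>!p. fst p \<in> S \<and> \<pi> (snd p) = 0 \<and> m = fst p + snd p)"
    unfolding BiHom_split_extension_def by blast+
  then obtain S where Ssub: "BiHom_subalgebra sM d' \<alpha>M \<beta>M S"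
    and Sdec: "\<And>m. \<exists>!p. fst p \<in> S \<and> \<pi> (snd p) = 0 \<and> m = fst p + snd p" by blast
  from ext have li: "Vector_Spaces.linear sV sM i" and ia0: "i \<circ> \<alpha>V = \<alpha>M \<circ> i"
    and ib0: "i \<circ> \<beta>V = \<beta>M \<circ> i" and ibr: "\<And>x y. i (\<mu> x y) = d' (i x) (i y)"
    and lp: "Vector_Spaces.linear sM sL \<pi>" and pa0: "\<pi> \<circ> \<alpha>M = \<alpha> \<circ> \<pi>"
    and pb0: "\<pi> \<circ> \<beta>M = \<beta> \<circ> \<pi>" and pbr: "\<And>x y. \<pi> (d' x y) = \<delta> (\<pi> x) (\<pi> y)"
    and inji: "inj i" and surjp: "surj \<pi>" and rng: "range i = {m. \<pi> m = 0}"
    unfolding BiHom_extension_def BiHom_morphism_def by blast+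
  have ia: "\<And>v. i (\<alpha>V v) = \<alpha>M (i v)" using ia0 by (metis comp_apply)
  have ib: "\<And>v. i (\<beta>V v) = \<beta>M (i v)" using ib0 by (metis comp_apply)
  have pa: "\<And>v. \<pi> (\<alpha>M v) = \<alpha> (\<pi> v)" using pa0 by (metis comp_apply)
  have pb: "\<And>v. \<pi> (\<beta>M v) = \<beta> (\<pi> v)" using pb0 by (metis comp_apply)
  have modM: "module sM" using lin_vs2[OF li] by (simp add: module_iff_vector_space)
  have Ssub': "module.subspace sM S \<and> \<alpha>M ` S \<subseteq> S \<and> \<beta>M ` S \<subseteq> S \<and> (\<forall>x\<in>S. \<forall>y\<in>S. d' x y \<in> S)"
    using Ssub unfolding BiHom_subalgebra_def .
  then have "module.subspace sM S" by (rule conjunct1)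
  then have subS: "0 \<in> S \<and> (\<forall>x\<in>S. \<forall>y\<in>S. x + y \<in> S) \<and> (\<forall>c. \<forall>x\<in>S. sM c x \<in> S)"
    unfolding module.subspace_def[OF modM] .
  have S0: "0 \<in> S" using subS by (rule conjunct1)
  have Sadd: "\<And>x y. x \<in> S \<Longrightarrow> y \<in> S \<Longrightarrow> x + y \<in> S" using subS by blast
  have Ssc: "\<And>c x. x \<in> S \<Longrightarrow> sM c x \<in> S" using subS by blast
  have Sa: "\<And>x. x \<in> S \<Longrightarrow> \<alpha>M x \<in> S" using Ssub' by blast
  have Sb: "\<And>x. x \<in> S \<Longrightarrow> \<beta>M x \<in> S" using Ssub' by blast
  have Sbr: "\<And>x y. x \<in> S \<Longrightarrow> y \<in> S \<Longrightarrow> d' x y \<in> S" using Ssub' by blast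
  from assms(1) have bild: "bilinear_map sL sL sL \<delta>" and la: "Vector_Spaces.linear sL sL \<alpha>"
    and lb: "Vector_Spaces.linear sL sL \<beta>" unfolding BiHomLie_def by blast+
  from assms(2) have bilmu: "bilinear_map sV sV sV \<mu>" and laV: "Vector_Spaces.linear sV sV \<alpha>V"
    and lbV: "Vector_Spaces.linear sV sV \<beta>V" and commV: "\<alpha>V \<circ> \<beta>V = \<beta>V \<circ> \<alpha>V"
    unfolding BiHomLie_def by blast+
  from assms(3) have bildM: "bilinear_map sM sM sM d'" and laM: "Vector_Spaces.linear sM sM \<alpha>M"
    and lbM: "Vector_Spaces.linear sM sM \<beta>M"
    and skM: "\<And>x y. d' (\<beta>M x) (\<alpha>M y) = - d' (\<beta>M y) (\<alpha>M x)"
    and jacM: "\<And>x y z. d' (\<beta>M (\<beta>M x)) (d' (\<beta>M y) (\<alpha>M z)) + d' (\<beta>M (\<beta>M y)) (d' (\<beta>M z) (\<alpha>M x))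
              + d' (\<beta>M (\<beta>M z)) (d' (\<beta>M x) (\<alpha>M y)) = 0"
    unfolding BiHomLie_def by blast+
  have vsL: "vector_space sL" using lin_vs1[OF la] .
  have vsV: "vector_space sV" using lin_vs1[OF li] .
  have vsM: "vector_space sM" using lin_vs2[OF li] .
  have vsP: "vector_space (sum_scale sL sV)" using vs_prod[OF vsL vsV] .
  have modP: "module (sum_scale sL sV)" using vsP by (simp add: module_iff_vector_space)
  have smd: "\<And>c a b. sM c (a + b) = sM c a + sM c b" using vsM unfolding vector_space_def by blast
  have iadd: "\<And>a b. i (a + b) = i a + i b" using lin_add[OF li] .
  have isc: "\<And>c a. i (sV c a) = sM c (i a)" using lin_scale[OF li] .
  have i0: "i 0 = 0" using lin_zero[OF li] .
  have iminus: "\<And>a. i (- a) = - i a" using lin_minus[OF li] .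
  have padd: "\<And>a b. \<pi> (a + b) = \<pi> a + \<pi> b" using lin_add[OF lp] .
  have pdiff: "\<And>a b. \<pi> (a - b) = \<pi> a - \<pi> b" using lin_diff[OF lp] .
  have psc: "\<And>c a. \<pi> (sM c a) = sL c (\<pi> a)" using lin_scale[OF lp] .
  have p0: "\<pi> 0 = 0" using lin_zero[OF lp] .
  have dadd1: "\<And>a b c. d' (a + b) c = d' a c + d' b c" using lin_add[OF bil_r[OF bildM]] by simp
  have dadd2: "\<And>a b c. d' c (a + b) = d' c a + d' c b" using lin_add[OF bil_l[OF bildM]] by simp
  have dsc1: "\<And>k a c. d' (sM k a) c = sM k (d' a c)" using lin_scale[OF bil_r[OF bildM]] by simp
  have dsc2: "\<And>k a c. d' c (sM k a) = sM k (d' c a)" using lin_scale[OF bil_l[OF bildM]] by simp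
  have d01: "\<And>c. d' 0 c = 0" using lin_zero[OF bil_r[OF bildM]] by simp
  have d02: "\<And>c. d' c 0 = 0" using lin_zero[OF bil_l[OF bildM]] by simp
  have del01: "\<And>c. \<delta> 0 c = 0" using lin_zero[OF bil_r[OF bild]] by simp
  have del02: "\<And>c. \<delta> c 0 = 0" using lin_zero[OF bil_l[OF bild]] by simp
  have mu01: "\<And>c. \<mu> 0 c = 0" using lin_zero[OF bil_r[OF bilmu]] by simp
  have mu02: "\<And>c. \<mu> c 0 = 0" using lin_zero[OF bil_l[OF bilmu]] by simp
  have injE: "\<And>a b. i a = i b \<Longrightarrow> a = b" using inji by (simp add: inj_eq)
  have pi_i: "\<And>v. \<pi> (i v) = 0" using rng by (metis (mono_tags) mem_Collect_eq rangeI)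
  have ker: "\<And>m. \<pi> m = 0 \<Longrightarrow> i (inv i m) = m"
    using rng by (metis (mono_tags, lifting) f_inv_into_f mem_Collect_eq)
  have sig_ex: "\<And>x. \<exists>s. s \<in> S \<and> \<pi> s = x"
  proof -
    fix x
    obtain m where m: "\<pi> m = x" using surjp by (metis surjD)
    obtain p where "fst p \<in> S" "\<pi> (snd p) = 0" "m = fst p + snd p" using Sdec[of m] by blast
    then have "\<pi> (fst p) = x" using m padd by simp
    then show "\<exists>s. s \<in> S \<and> \<pi> s = x" using \<open>fst p \<in> S\<close> by blast
  qed
  have sig_un: "\<And>s1 s2. s1 \<in> S \<Longrightarrow> s2 \<in> S \<Longrightarrow> \<pi> s1 = \<pi> s2 \<Longrightarrow> s1 = s2"
  proof -
    fix s1 s2 assume h: "s1 \<in> S" "s2 \<in> S" "\<pi> s1 = \<pi> s2"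
    have P1: "fst (s1, 0::'m) \<in> S \<and> \<pi> (snd (s1, 0::'m)) = 0 \<and> s1 = fst (s1, 0::'m) + snd (s1, 0::'m)"
      using h p0 by simp
    have P2: "fst (s2, s1 - s2) \<in> S \<and> \<pi> (snd (s2, s1 - s2)) = 0 \<and> s1 = fst (s2, s1 - s2) + snd (s2, s1 - s2)"
      using h pdiff by simp
    have "(s1, 0::'m) = (s2, s1 - s2)" using Sdec[of s1] P1 P2 by blast
    then show "s1 = s2" by simp
  qed
  define \<sigma> where "\<sigma> x = (THE s. s \<in> S \<and> \<pi> s = x)" for x
  have sig: "\<And>x. \<sigma> x \<in> S \<and> \<pi> (\<sigma> x) = x"
  proof -
    fix x
    have "\<exists>!s. s \<in> S \<and> \<pi> s = x" using sig_ex sig_un by blast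
    then show "\<sigma> x \<in> S \<and> \<pi> (\<sigma> x) = x" unfolding \<sigma>_def by (rule theI')
  qed
  have sigS: "\<And>x. \<sigma> x \<in> S" and psig: "\<And>x. \<pi> (\<sigma> x) = x" using sig by auto
  have sigU: "\<And>x s. s \<in> S \<Longrightarrow> \<pi> s = x \<Longrightarrow> \<sigma> x = s" using sig_un sigS psig by simp
  have sadd: "\<And>x y. \<sigma> (x + y) = \<sigma> x + \<sigma> y"
    by (rule sigU) (simp_all add: Sadd sigS padd psig)
  have ssc: "\<And>c x. \<sigma> (sL c x) = sM c (\<sigma> x)"
    by (rule sigU) (simp_all add: Ssc sigS psc psig)
  have s0: "\<sigma> 0 = 0" by (rule sigU) (simp_all add: S0 p0)
  have sa: "\<And>x. \<sigma> (\<alpha> x) = \<alpha>M (\<sigma> x)"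
    by (rule sigU) (simp_all add: Sa sigS pa psig)
  have sb: "\<And>x. \<sigma> (\<beta> x) = \<beta>M (\<sigma> x)"
    by (rule sigU) (simp_all add: Sb sigS pb psig)
  have sbr: "\<And>x y. \<sigma> (\<delta> x y) = d' (\<sigma> x) (\<sigma> y)"
    by (rule sigU) (simp_all add: Sbr sigS pbr psig)
  define ll where "ll x v = inv i (d' (\<sigma> x) (i v))" for x v
  define lr where "lr v x = inv i (d' (i v) (\<sigma> x))" for x v
  have llk: "\<And>x v. i (ll x v) = d' (\<sigma> x) (i v)"
    unfolding ll_def by (rule ker) (simp add: pbr psig pi_i del02)
  have lrk: "\<And>x v. i (lr v x) = d' (i v) (\<sigma> x)"
    unfolding lr_def by (rule ker) (simp add: pbr psig pi_i del01)
  have bll: "bilinear_map sL sV sV ll"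
    unfolding bilinear_map_def
    apply (intro allI conjI)
     apply (rule linI[OF vsV vsV])
      apply (rule injE, simp add: llk iadd dadd2)
     apply (rule injE, simp add: llk isc dsc2)
    apply (rule linI[OF vsL vsV])
     apply (rule injE, simp add: llk iadd dadd1 sadd)
    apply (rule injE, simp add: llk isc dsc1 ssc)
    done
  have blr: "bilinear_map sV sL sV lr"
    unfolding bilinear_map_def
    apply (intro allI conjI)
     apply (rule linI[OF vsL vsV])
      apply (rule injE, simp add: lrk iadd dadd2 sadd)
     apply (rule injE, simp add: lrk isc dsc2 ssc)
    apply (rule linI[OF vsV vsV])
     apply (rule injE, simp add: lrk iadd dadd1)
    apply (rule injE, simp add: lrk isc dsc1)
    done
  have bth: "bilinear_map sL sL sV (\<lambda>x y. 0)"
    unfolding bilinear_map_def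
    by (auto intro!: linI[OF vsL vsV] simp: vs_scale_zero[OF vsV])
  have ll01: "\<And>w. ll 0 w = 0" using lin_zero[OF bil_r[OF bll]] by simp
  have ll02: "\<And>w. ll w 0 = 0" using lin_zero[OF bil_l[OF bll]] by simp
  have lr01: "\<And>w. lr 0 w = 0" using lin_zero[OF bil_r[OF blr]] by simp
  have lr02: "\<And>w. lr w 0 = 0" using lin_zero[OF bil_l[OF blr]] by simp
  have rep: "BiHom_representation \<delta> \<alpha> \<beta> \<alpha>V \<beta>V ll lr"
    unfolding BiHom_representation_def
  proof (intro conjI allI)
    show "\<alpha>V \<circ> \<beta>V = \<beta>V \<circ> \<alpha>V" by (rule commV)
  next
    fix y v
    show "lr (\<beta>V v) (\<alpha> y) = - ll (\<beta> y) (\<alpha>V v)"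
      apply (rule injE)
      using skM[of "i v" "\<sigma> y"] by (simp add: lrk llk iminus ia ib sa sb)
  next
    fix x y v
    show "ll (\<beta> (\<beta> x)) (ll (\<beta> y) (\<alpha>V v)) + ll (\<beta> (\<beta> y)) (lr (\<beta>V v) (\<alpha> x))
              + lr (\<beta>V (\<beta>V v)) (\<delta> (\<beta> x) (\<alpha> y)) = 0"
      apply (rule injE)
      using jacM[of "\<sigma> x" "\<sigma> y" "i v"] by (simp add: lrk llk iadd i0 ia ib sa sb sbr)
  qed
  have coc: "BiHom_2cocycle \<delta> \<alpha> \<beta> ll (\<lambda>x y. 0)"
    unfolding BiHom_2cocycle_def by (simp add: ll02)
  define dP where "dP = semidirect_bracket \<delta> (\<lambda>x y. 0) ll lr \<mu>"
  define \<Phi> where "\<Phi> p = \<sigma> (fst p) + i (snd p)" for p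
  have lPhi: "Vector_Spaces.linear (sum_scale sL sV) sM \<Phi>"
    apply (rule linI[OF vsP vsM])
     apply (simp add: \<Phi>_def sadd iadd ac_simps)
    apply (simp add: \<Phi>_def sum_scale_def ssc isc smd)
    done
  have Phia: "\<And>p. \<Phi> (sum_map \<alpha> \<alpha>V p) = \<alpha>M (\<Phi> p)"
    by (simp add: \<Phi>_def sum_map_def sa ia lin_add[OF laM])
  have Phib: "\<And>p. \<Phi> (sum_map \<beta> \<beta>V p) = \<beta>M (\<Phi> p)"
    by (simp add: \<Phi>_def sum_map_def sb ib lin_add[OF lbM])
  have Phibr: "\<And>p q. \<Phi> (dP p q) = d' (\<Phi> p) (\<Phi> q)"
    by (simp add: \<Phi>_def dP_def semidirect_bracket_def sbr iadd i0 llk lrk ibr dadd1 dadd2 ac_simps)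
  have Phiinj: "inj \<Phi>"
  proof (rule injI)
    fix p q assume h: "\<Phi> p = \<Phi> q"
    then have "\<pi> (\<Phi> p) = \<pi> (\<Phi> q)" by simp
    then have f: "fst p = fst q" by (simp add: \<Phi>_def padd psig pi_i)
    with h have "i (snd p) = i (snd q)" by (simp add: \<Phi>_def)
    then have "snd p = snd q" by (rule injE)
    with f show "p = q" by (simp add: prod_eq_iff)
  qed
  have Phisurj: "surj \<Phi>"
  proof (rule surjI)
    fix m
    have "\<pi> (m - \<sigma> (\<pi> m)) = 0" by (simp add: pdiff psig)
    then show "\<Phi> (\<pi> m, inv i (m - \<sigma> (\<pi> m))) = m" by (simp add: \<Phi>_def ker)
  qed
  have Phibij: "bij \<Phi>" using Phiinj Phisurj by (simp add: bij_def)
  have LieP: "BiHomLie (sum_scale sL sV) dP (sum_map \<alpha> \<alpha>V) (sum_map \<beta> \<beta>V)"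
    by (rule transport_BiHomLie[OF lPhi Phiinj Phia Phib Phibr assms(3)])
  have morPhi: "BiHom_morphism (sum_scale sL sV) dP (sum_map \<alpha> \<alpha>V) (sum_map \<beta> \<beta>V) sM d' \<alpha>M \<beta>M \<Phi>"
    unfolding BiHom_morphism_def using lPhi Phia Phib Phibr by (auto simp: fun_eq_iff)
  have iso: "BiHom_iso (sum_scale sL sV) dP (sum_map \<alpha> \<alpha>V) (sum_map \<beta> \<beta>V) sM d' \<alpha>M \<beta>M \<Phi>"
    unfolding BiHom_iso_def using morPhi Phibij inv_morphism[OF morPhi Phibij] by blast
  have equiv: "BiHom_ext_equivalent sV (sum_scale sL sV) dP (sum_map \<alpha> \<alpha>V) (sum_map \<beta> \<beta>V)
             sL (\<lambda>v. (0, v)) fst sV sM d' \<alpha>M \<beta>M sL i \<pi>"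
    unfolding BiHom_ext_equivalent_def
    apply (rule exI[of _ id], rule exI[of _ id], rule exI[of _ \<Phi>])
    apply (intro conjI)
        apply (rule linI[OF vsV vsV]; simp)
       apply (rule linI[OF vsL vsL]; simp)
      apply (rule iso)
     apply (simp add: fun_eq_iff \<Phi>_def s0)
    apply (simp add: fun_eq_iff \<Phi>_def padd psig pi_i)
    done
  have split: "BiHom_split_extension sV \<mu> \<alpha>V \<beta>V (sum_scale sL sV) dP (sum_map \<alpha> \<alpha>V) (sum_map \<beta> \<beta>V)
             sL \<delta> \<alpha> \<beta> (\<lambda>v. (0, v)) fst"
    unfolding BiHom_split_extension_def BiHom_extension_def
  proof (intro conjI)
    show "BiHom_morphism sV \<mu> \<alpha>V \<beta>V (sum_scale sL sV) dP (sum_map \<alpha> \<alpha>V) (sum_map \<beta> \<beta>V) (\<lambda>v. (0, v))"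
      unfolding BiHom_morphism_def
      apply (intro conjI)
         apply (rule linI[OF vsV vsP]; simp add: sum_scale_def vs_scale_zero[OF vsL])
        apply (simp add: fun_eq_iff sum_map_def lin_zero[OF la])
       apply (simp add: fun_eq_iff sum_map_def lin_zero[OF lb])
      apply (simp add: dP_def semidirect_bracket_def del01 ll01 lr02)
      done
    show "BiHom_morphism (sum_scale sL sV) dP (sum_map \<alpha> \<alpha>V) (sum_map \<beta> \<beta>V) sL \<delta> \<alpha> \<beta> fst"
      unfolding BiHom_morphism_def
      apply (intro conjI)
         apply (rule linI[OF vsP vsL]; simp add: sum_scale_def)
        apply (simp add: fun_eq_iff sum_map_def)
       apply (simp add: fun_eq_iff sum_map_def)
      apply (simp add: dP_def semidirect_bracket_def)
      done
    show "inj (\<lambda>v::'v. (0::'l, v))" by (rule injI) simp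
    show "surj (fst :: 'l \<times> 'v \<Rightarrow> 'l)" by (rule surjI[of _ "\<lambda>x. (x, 0)"]) simp
    show "range (\<lambda>v::'v. (0::'l, v)) = {m. fst m = 0}" by (auto simp: image_iff prod_eq_iff)
    show "\<exists>S. BiHom_subalgebra (sum_scale sL sV) dP (sum_map \<alpha> \<alpha>V) (sum_map \<beta> \<beta>V) S \<and>
          (\<forall>m. \<exists>!p. fst p \<in> S \<and> fst (snd p) = 0 \<and> m = fst p + snd p)"
    proof (rule exI[of _ "{p. snd p = 0}"], intro conjI allI)
      show "BiHom_subalgebra (sum_scale sL sV) dP (sum_map \<alpha> \<alpha>V) (sum_map \<beta> \<beta>V) {p. snd p = 0}"
        unfolding BiHom_subalgebra_def module.subspace_def[OF modP]
        by (auto simp: sum_scale_def sum_map_def dP_def semidirect_bracket_def vs_scale_zero[OF vsV]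
            lin_zero[OF laV] lin_zero[OF lbV] ll02 lr01 mu01)
      fix m :: "'l \<times> 'v"
      show "\<exists>!p. fst p \<in> {p. snd p = 0} \<and> fst (snd p) = 0 \<and> m = fst p + snd p"
      proof (rule ex1I[of _ "((fst m, 0), (0, snd m))"])
        show "fst ((fst m, 0::'v), (0::'l, snd m)) \<in> {p. snd p = 0} \<and>
            fst (snd ((fst m, 0::'v), (0::'l, snd m))) = 0 \<and>
            m = fst ((fst m, 0::'v), (0::'l, snd m)) + snd ((fst m, 0::'v), (0::'l, snd m))"
          by (simp add: prod_eq_iff)
        fix p assume "fst p \<in> {p. snd p = 0} \<and> fst (snd p) = 0 \<and> m = fst p + snd p"
        then show "p = ((fst m, 0), (0, snd m))" by (auto simp: prod_eq_iff)
      qed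
    qed
  qed (fact assms(2) LieP assms(1))+
  show ?thesis
    apply (rule exI[of _ ll], rule exI[of _ lr], rule exI[of _ "\<lambda>x y. 0"])
    using bll blr bth rep coc split equiv unfolding dP_def by blast
qed

end
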